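(* Let $C_n$ be the number of cycles of a permutation chosen uniformly at random from the permutations of $[2n]$ with all cycle lengths even. Then, as $n\to\infty$, $C_n$ is asymptotically normally distributed, with \[ \mathbb{E}(C_n)=\frac12\log n+\left(\frac12\gamma+\log2\right)+O(n^{-1}) \] and \[ \mathbb{V}(C_n)=\frac12\log n+\left(\frac12\gamma+\log2-\frac{\pi^2}{8}\right)+O(n^{-1}). \]
   Context: $\gamma$ denotes the Euler–Mascheroni constant. Asymptotic normality means $(C_n-\mathbb{E}C_n)/\sqrt{\mathbb{V}C_n}$ converges in distribution to a standard normal. *)

theory Defs
  imports "HOL-Probability.Probability" "HOL-Combinatorics.Orbits" "HOL-Library.Landau_Symbols"
begin

definition even_cycle_perms :: "nat \<Rightarrow> (nat \<Rightarrow> nat) set" where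
  "even_cycle_perms n = {p. p permutes {..<2*n} \<and> (\<forall>x<2*n. even (card (orbit p x)))}"

text \<open>Number of cycles of a permutation of {0..<2n} (fixed points count as cycles).\<close>
definition num_cycles :: "nat \<Rightarrow> (nat \<Rightarrow> nat) \<Rightarrow> nat" where
  "num_cycles n p = card ((\<lambda>x. orbit p x) ` {..<2*n})"

definition C_dist :: "nat \<Rightarrow> real pmf" where
  "C_dist n = map_pmf (\<lambda>p. real (num_cycles n p)) (pmf_of_set (even_cycle_perms n))"

definition C_mean :: "nat \<Rightarrow> real" where
  "C_mean n = measure_pmf.expectation (C_dist n) (\<lambda>x. x)"

definition C_var :: "nat \<Rightarrow> real" where
  "C_var n = measure_pmf.variance (C_dist n) (\<lambda>x. x)"

end

theory Submission
  imports Defs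
begin


lemma orbit_perm_same: "permutation f \<Longrightarrow> y \<in> orbit f x \<Longrightarrow> orbit f y = orbit f x"
  by (metis cyclic_on_orbit' orbit_cyclic_eq3)

lemma ins_vals:
  assumes "r permutes T" "d \<in> T" "a \<notin> T" "b \<notin> T" "a \<noteq> b"
  defines "q \<equiv> r \<circ> Transposition.transpose d a \<circ> Transposition.transpose a b"
  shows "q d = a" "q a = b" "q b = r d" "\<And>x. x \<noteq> a \<Longrightarrow> x \<noteq> b \<Longrightarrow> x \<noteq> d \<Longrightarrow> q x = r x"
proof -
  have ra: "r a = a" and rb: "r b = b" using permutes_not_in[OF assms(1)] assms by auto
  have "d \<noteq> a" "d \<noteq> b" using assms by auto
  then show "q d = a" "q a = b" "q b = r d" "\<And>x. x \<noteq> a \<Longrightarrow> x \<noteq> b \<Longrightarrow> x \<noteq> d \<Longrightarrow> q x = r x"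
    using ra rb assms(5) by (auto simp: q_def transpose_def)
qed

lemma ins_orbits:
  assumes r: "r permutes T" and fin: "finite T" and d: "d \<in> T" and ab: "a \<notin> T" "b \<notin> T" "a \<noteq> b"
  defines "q \<equiv> r \<circ> Transposition.transpose d a \<circ> Transposition.transpose a b"
  shows "q permutes insert a (insert b T)"
    and "orbit q d = insert a (insert b (orbit r d))"
    and "\<And>x. x\<in>T \<Longrightarrow> orbit q x = (if d \<in> orbit r x then insert a (insert b (orbit r x)) else orbit r x)"
    and "orbit q a = insert a (insert b (orbit r d))"
    and "orbit q b = insert a (insert b (orbit r d))"
proof -
  note v = ins_vals[OF r d ab, folded q_def]
  have s1: "r permutes insert a (insert b T)" by (rule permutes_subset[OF r]) auto
  have s2: "Transposition.transpose d a permutes insert a (insert b T)" using d by (simp add: permutes_swap_id)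
  have s3: "Transposition.transpose a b permutes insert a (insert b T)" by (simp add: permutes_swap_id)
  show qp: "q permutes insert a (insert b T)" unfolding q_def
    using permutes_compose[OF s3 permutes_compose[OF s2 s1]] by (simp add: comp_assoc)
  have pr: "permutation r" unfolding permutation_permutes using r fin by blast
  have fS: "finite (insert a (insert b T))" using fin by simp
  have pq: "permutation q" using permutation_permutes qp fS by blast
  have oT: "orbit r x \<subseteq> T" if "x \<in> T" for x using permutes_orbit_subset[OF r that] .
  have dd: "d \<noteq> a" "d \<noteq> b" using d ab by auto
  show od: "orbit q d = insert a (insert b (orbit r d))"
  proof (intro equalityI subsetI)
    fix y assume "y \<in> orbit q d"
    then show "y \<in> insert a (insert b (orbit r d))"
    proof induct
      case base then show ?case using v by simp
    next
      case (step y)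
      then show ?case
      proof (elim insertE)
        assume "y = a" then show ?thesis using v by simp
      next
        assume "y = b" then show ?thesis using v by (simp add: orbit.base)
      next
        assume y: "y \<in> orbit r d"
        show ?thesis
        proof (cases "y = d")
          case True then show ?thesis using v by simp
        next
          case False
          have "y \<in> T" using y oT d by blast
          then have "q y = r y" using v(4)[of y] False ab by auto
          then show ?thesis using y by (simp add: orbit.step)
        qed
      qed
    qed
  next
    fix y assume y: "y \<in> insert a (insert b (orbit r d))"
    have a: "a \<in> orbit q d" using v orbit.base[of q d] by simp
    have b: "b \<in> orbit q d" using v orbit.step[OF a] by simp
    have rd: "r d \<in> orbit q d" using v orbit.step[OF b] by simp
    have "z \<in> orbit q d" if "z \<in> orbit r d" for z using that
    proof induct
      case base then show ?case by (rule rd)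
    next
      case (step z)
      show ?case
      proof (cases "z = d")
        case True then show ?thesis using rd by simp
      next
        case False
        have "z \<in> T" using step(1) oT d by blast
        then have "q z = r z" using v(4)[of z] False ab by auto
        then show ?thesis using orbit.step[OF step(2)] by simp
      qed
    qed
    then show "y \<in> orbit q d" using y a b by blast
  qed
  show "orbit q a = insert a (insert b (orbit r d))"
    using orbit_perm_same[OF pq, of a d] od by simp
  show "orbit q b = insert a (insert b (orbit r d))"
    using orbit_perm_same[OF pq, of b d] od by simp
  fix x assume x: "x \<in> T"
  show "orbit q x = (if d \<in> orbit r x then insert a (insert b (orbit r x)) else orbit r x)"
  proof (cases "d \<in> orbit r x")
    case True
    have e1: "orbit r x = orbit r d" using orbit_perm_same[OF pr True] by simp
    have "x \<in> orbit r d" using e1 permutation_self_in_orbit[OF pr] by blast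
    then have "x \<in> orbit q d" using od by blast
    then have "orbit q x = orbit q d" using orbit_perm_same[OF pq] by blast
    then show ?thesis using True e1 od by simp
  next
    case False
    have xo: "x \<in> orbit r x" using permutation_self_in_orbit[OF pr] .
    have "orbit r x = orbit q x"
    proof (rule orbit_cong0[OF xo])
      show "r \<in> orbit r x \<rightarrow> orbit r x" by (auto intro: orbit.step)
      fix y assume y: "y \<in> orbit r x"
      then have yT: "y \<in> T" and yd: "y \<noteq> d" using oT x False by auto
      have "y \<noteq> a" "y \<noteq> b" using yT ab by auto
      then show "r y = q y" using v(4)[of y] yd by simp
    qed
    then show ?thesis using False by simp
  qed
qed

lemma two_orbits:
  assumes r: "r permutes T" and fin: "finite T" and ab: "a \<notin> T" "b \<notin> T" "a \<noteq> b"
  defines "q \<equiv> Transposition.transpose a b \<circ> r"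
  shows "q permutes insert a (insert b T)"
    and "\<And>x. x\<in>T \<Longrightarrow> orbit q x = orbit r x"
    and "orbit q a = {a, b}"
    and "orbit q b = {a, b}"
    and "q a = b" "q b = a"
proof -
  have ra: "r a = a" and rb: "r b = b" using permutes_not_in[OF assms(1)] assms by auto
  show qa: "q a = b" and qb: "q b = a" using ra rb by (auto simp: q_def)
  have s1: "r permutes insert a (insert b T)" by (rule permutes_subset[OF r]) auto
  have s3: "Transposition.transpose a b permutes insert a (insert b T)" by (simp add: permutes_swap_id)
  show qp: "q permutes insert a (insert b T)" unfolding q_def
    using permutes_compose[OF s1 s3] by simp
  have fS: "finite (insert a (insert b T))" using fin by simp
  have pq: "permutation q" using permutation_permutes qp fS by blast
  have qT: "q y = r y" if "y \<in> T" for y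
  proof -
    have "r y \<in> T" using permutes_in_image[OF r] that by simp
    then have "r y \<noteq> a" "r y \<noteq> b" using ab by auto
    then show ?thesis by (simp add: q_def)
  qed
  show oa: "orbit q a = {a, b}"
  proof (intro equalityI subsetI)
    fix y assume "y \<in> orbit q a" then show "y \<in> {a,b}" by induct (use qa qb in auto)
  next
    have "b \<in> orbit q a" using orbit.base[of q a] qa by simp
    moreover have "a \<in> orbit q a" using orbit.step[OF calculation] qb by simp
    ultimately show "y \<in> orbit q a" if "y \<in> {a,b}" for y using that by blast
  qed
  show "orbit q b = {a, b}" using orbit_perm_same[OF pq, of b a] oa by simp
  fix x assume x: "x \<in> T"
  show "orbit q x = orbit r x"
    by (rule orbit_cong0[OF x]) (auto simp: qT permutes_in_image[OF r])
qed


definition ECP :: "'a set \<Rightarrow> ('a \<Rightarrow> 'a) set" where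
  "ECP S = {p. p permutes S \<and> (\<forall>x\<in>S. even (card (orbit p x)))}"

definition NC :: "'a set \<Rightarrow> ('a \<Rightarrow> 'a) \<Rightarrow> nat" where
  "NC S p = card ((\<lambda>x. orbit p x) ` S)"

lemma card_ins2: "finite A \<Longrightarrow> a \<notin> A \<Longrightarrow> b \<notin> A \<Longrightarrow> a \<noteq> b \<Longrightarrow> card (insert a (insert b A)) = card A + 2"
  by simp

lemma ins_props:
  assumes r: "r permutes T" and fin: "finite T" and d: "d \<in> T" and ab: "a \<notin> T" "b \<notin> T" "a \<noteq> b"
  defines "q \<equiv> r \<circ> Transposition.transpose d a \<circ> Transposition.transpose a b"
  shows "q \<in> ECP (insert a (insert b T)) \<longleftrightarrow> r \<in> ECP T"
    and "NC (insert a (insert b T)) q = NC T r"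
proof -
  note o = ins_orbits[OF r fin d ab, folded q_def]
  have oT: "orbit r x \<subseteq> T" if "x \<in> T" for x using permutes_orbit_subset[OF r that] .
  have fo: "finite (orbit r x)" if "x \<in> T" for x using oT[OF that] fin finite_subset by blast
  have c2: "card (insert a (insert b (orbit r x))) = card (orbit r x) + 2" if "x \<in> T" for x
  proof -
    have "a \<notin> orbit r x" "b \<notin> orbit r x" using oT[OF that] ab by auto
    then show ?thesis using fo[OF that] ab(3) by simp
  qed
  have ev: "(\<forall>x\<in>insert a (insert b T). even (card (orbit q x))) \<longleftrightarrow> (\<forall>x\<in>T. even (card (orbit r x)))"
  proof
    assume H: "\<forall>x\<in>insert a (insert b T). even (card (orbit q x))"
    show "\<forall>x\<in>T. even (card (orbit r x))"
    proof
      fix x assume x: "x \<in> T"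
      have "even (card (orbit q x))" using H x by simp
      then show "even (card (orbit r x))" using o(3)[OF x] c2[OF x] by (simp split: if_splits)
    qed
  next
    assume H: "\<forall>x\<in>T. even (card (orbit r x))"
    have e: "even (card (orbit q x))" if "x \<in> T" for x
      using o(3)[OF that] c2[OF that] H that by (simp split: if_splits)
    have "even (card (orbit q a))" "even (card (orbit q b))"
      using o(4,5) c2[OF d] H d by simp_all
    then show "\<forall>x\<in>insert a (insert b T). even (card (orbit q x))" using e by blast
  qed
  show "q \<in> ECP (insert a (insert b T)) \<longleftrightarrow> r \<in> ECP T"
    unfolding ECP_def using ev o(1) r by simp
  define F where "F X = (if d \<in> X then insert a (insert b X) else X)" for X
  have img: "(\<lambda>x. orbit q x) ` insert a (insert b T) = F ` ((\<lambda>x. orbit r x) ` T)"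
  proof (intro equalityI subsetI)
    fix Y assume "Y \<in> (\<lambda>x. orbit q x) ` insert a (insert b T)"
    then obtain x where x: "x \<in> insert a (insert b T)" and Y: "Y = orbit q x" by blast
    show "Y \<in> F ` ((\<lambda>x. orbit r x) ` T)"
    proof (cases "x \<in> T")
      case True
      have "Y = F (orbit r x)" using Y o(3)[OF True] by (simp add: F_def)
      then show ?thesis using True by blast
    next
      case False
      then have "Y = insert a (insert b (orbit r d))" using x Y o(4,5) by auto
      moreover have "d \<in> orbit r d"
        by (rule permutation_self_in_orbit) (use r fin in \<open>auto simp: permutation_permutes\<close>)
      ultimately have "Y = F (orbit r d)" by (simp add: F_def)
      then show ?thesis using d by blast
    qed
  next
    fix Y assume "Y \<in> F ` ((\<lambda>x. orbit r x) ` T)"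
    then obtain x where x: "x \<in> T" and Y: "Y = F (orbit r x)" by blast
    then have "Y = orbit q x" using o(3)[OF x] by (simp add: F_def)
    then show "Y \<in> (\<lambda>x. orbit q x) ` insert a (insert b T)" using x by blast
  qed
  have inj: "inj_on F ((\<lambda>x. orbit r x) ` T)"
  proof (rule inj_onI)
    fix X Y assume X: "X \<in> (\<lambda>x. orbit r x) ` T" and Y: "Y \<in> (\<lambda>x. orbit r x) ` T" and e: "F X = F Y"
    have "X \<subseteq> T" "Y \<subseteq> T" using X Y oT by auto
    then have "a \<notin> X" "b \<notin> X" "a \<notin> Y" "b \<notin> Y" using ab by auto
    then show "X = Y" using e d unfolding F_def by (auto split: if_splits)
  qed
  show "NC (insert a (insert b T)) q = NC T r"
    unfolding NC_def img using card_image[OF inj] .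
qed

lemma two_props:
  assumes r: "r permutes T" and fin: "finite T" and ab: "a \<notin> T" "b \<notin> T" "a \<noteq> b"
  defines "q \<equiv> Transposition.transpose a b \<circ> r"
  shows "q \<in> ECP (insert a (insert b T)) \<longleftrightarrow> r \<in> ECP T"
    and "NC (insert a (insert b T)) q = Suc (NC T r)"
proof -
  note o = two_orbits[OF r fin ab, folded q_def]
  have ev: "(\<forall>x\<in>insert a (insert b T). even (card (orbit q x))) \<longleftrightarrow> (\<forall>x\<in>T. even (card (orbit r x)))"
    using o(2,3,4) ab(3) by auto
  show "q \<in> ECP (insert a (insert b T)) \<longleftrightarrow> r \<in> ECP T"
    unfolding ECP_def using ev o(1) r by simp
  have img: "(\<lambda>x. orbit q x) ` insert a (insert b T) = insert {a,b} ((\<lambda>x. orbit r x) ` T)"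
    using o(2,3,4) by auto
  have "{a,b} \<notin> (\<lambda>x. orbit r x) ` T"
  proof
    assume "{a,b} \<in> (\<lambda>x. orbit r x) ` T"
    then obtain x where "x \<in> T" "{a,b} = orbit r x" by blast
    then have "a \<in> T" using permutes_orbit_subset[OF r] by blast
    then show False using ab by simp
  qed
  moreover have "finite ((\<lambda>x. orbit r x) ` T)" using fin by simp
  ultimately show "NC (insert a (insert b T)) q = Suc (NC T r)"
    unfolding NC_def img by simp
qed


lemma fiber_count:
  assumes fin: "finite T" and ab: "a \<notin> T" "b \<notin> T" "a \<noteq> b"
  shows "card {p\<in>ECP (insert a (insert b T)). NC (insert a (insert b T)) p = k \<and> p a = b}
       = (case k of 0 \<Rightarrow> 0 | Suc j \<Rightarrow> card {r\<in>ECP T. NC T r = j}) + card {r\<in>ECP T. NC T r = k} * card T"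
proof -
  define S where "S = insert a (insert b T)"
  define P where "P = {p\<in>ECP S. NC S p = k \<and> p a = b}"
  define A where "A = {r\<in>ECP T. NC T r = k}"
  define two where "two r = Transposition.transpose a b \<circ> r" for r :: "'a \<Rightarrow> 'a"
  define ins where "ins rd = (fst rd) \<circ> Transposition.transpose (snd rd) a \<circ> Transposition.transpose a b" for rd :: "('a \<Rightarrow> 'a) \<times> 'a"
  have finS: "finite S" using fin by (simp add: S_def)
  have aS: "a \<in> S" and bS: "b \<in> S" by (auto simp: S_def)
  have finP: "finite P"
    by (rule finite_subset[OF _ finite_permutations[OF finS]]) (auto simp: P_def ECP_def)
  define P1 where "P1 = {p\<in>P. p b = a}"
  define P2 where "P2 = {p\<in>P. p b \<noteq> a}"
  have PU: "P = P1 \<union> P2" "P1 \<inter> P2 = {}" by (auto simp: P1_def P2_def)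
  have finP1: "finite P1" and finP2: "finite P2" using finP by (auto simp: P1_def P2_def)
  have restr: "r permutes T" if "r permutes S" "r a = a" "r b = b" for r
    by (rule permutes_superset[OF that(1)]) (use that in \<open>auto simp: S_def\<close>)
  have P1eq: "P1 = two ` {r\<in>ECP T. Suc (NC T r) = k}"
  proof (intro equalityI subsetI)
    fix p assume "p \<in> P1"
    then have p: "p \<in> ECP S" "NC S p = k" "p a = b" "p b = a" by (auto simp: P1_def P_def)
    then have pS: "p permutes S" by (simp add: ECP_def)
    define r where "r = Transposition.transpose a b \<circ> p"
    have rS: "r permutes S" unfolding r_def by (rule permutes_compose[OF pS permutes_swap_id[OF aS bS]])
    have "r a = a" "r b = b" using p(3,4) by (auto simp: r_def)
    then have rT: "r permutes T" using restr rS by blast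
    have pr: "p = two r" by (rule ext) (simp add: two_def r_def)
    note tp = two_props[OF rT fin ab, folded two_def S_def]
    have "r \<in> ECP T" using tp(1) p(1) pr by simp
    moreover have "Suc (NC T r) = k" using tp(2) p(2) pr by simp
    ultimately show "p \<in> two ` {r\<in>ECP T. Suc (NC T r) = k}" using pr by blast
  next
    fix p assume "p \<in> two ` {r\<in>ECP T. Suc (NC T r) = k}"
    then obtain r where r: "r \<in> ECP T" "Suc (NC T r) = k" and p: "p = two r" by blast
    have rT: "r permutes T" using r by (simp add: ECP_def)
    note tp = two_props[OF rT fin ab, folded two_def S_def]
    note to = two_orbits[OF rT fin ab, folded two_def S_def]
    show "p \<in> P1" using tp r to(5,6) p by (simp add: P1_def P_def)
  qed
  have inj2: "inj_on two X" for X
  proof (rule inj_onI)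
    fix r r' assume "two r = two r'"
    then have "Transposition.transpose a b \<circ> (Transposition.transpose a b \<circ> r) = Transposition.transpose a b \<circ> (Transposition.transpose a b \<circ> r')"
      by (simp add: two_def)
    then show "r = r'" by (simp add: o_assoc)
  qed
  have cP1: "card P1 = (case k of 0 \<Rightarrow> 0 | Suc j \<Rightarrow> card {r\<in>ECP T. NC T r = j})"
    unfolding P1eq card_image[OF inj2] by (cases k) simp_all
  have P2eq: "P2 = ins ` (A \<times> T)"
  proof (intro equalityI subsetI)
    fix p assume "p \<in> P2"
    then have p: "p \<in> ECP S" "NC S p = k" "p a = b" "p b \<noteq> a" by (auto simp: P2_def P_def)
    then have pS: "p permutes S" by (simp add: ECP_def)
    define d where "d = inv p a"
    have pd: "p d = a" unfolding d_def using permutes_inverses(1)[OF pS] by simp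
    have "d \<in> S" unfolding d_def using permutes_in_image[OF permutes_inv[OF pS]] aS by simp
    moreover have "d \<noteq> a" using pd p(3) ab(3) by auto
    moreover have "d \<noteq> b" using pd p(4) by auto
    ultimately have dT: "d \<in> T" by (simp add: S_def)
    define r where "r = p \<circ> Transposition.transpose a b \<circ> Transposition.transpose d a"
    have rS: "r permutes S" unfolding r_def
      by (intro permutes_compose[OF permutes_swap_id[OF _ aS]] permutes_compose[OF permutes_swap_id[OF aS bS] pS]) (use dT in \<open>simp add: S_def\<close>)
    have "r a = a" using pd \<open>d \<noteq> a\<close> \<open>d \<noteq> b\<close> by (simp add: r_def)
    moreover have "r b = b" using p(3) \<open>d \<noteq> a\<close> \<open>d \<noteq> b\<close> ab(3) by (simp add: r_def transpose_def)
    ultimately have rT: "r permutes T" using restr rS by blast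
    have pr: "p = ins (r, d)" by (rule ext) (simp add: ins_def r_def)
    note ip = ins_props[OF rT fin dT ab, folded S_def]
    have "r \<in> ECP T" using ip(1) p(1) pr by (simp add: ins_def)
    moreover have "NC T r = k" using ip(2) p(2) pr by (simp add: ins_def)
    ultimately show "p \<in> ins ` (A \<times> T)" using pr dT unfolding A_def by blast
  next
    fix p assume "p \<in> ins ` (A \<times> T)"
    then obtain r d where r: "r \<in> ECP T" "NC T r = k" and dT: "d \<in> T" and p: "p = ins (r, d)"
      unfolding A_def by blast
    have rT: "r permutes T" using r by (simp add: ECP_def)
    note ip = ins_props[OF rT fin dT ab, folded S_def]
    note iv = ins_vals[OF rT dT ab]
    have "r d \<in> T" using permutes_in_image[OF rT] dT by simp
    then have "r d \<noteq> a" using ab by auto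
    then show "p \<in> P2" using ip r iv p by (simp add: P2_def P_def ins_def)
  qed
  have injI: "inj_on ins (A \<times> T)"
  proof (rule inj_onI)
    fix x y assume x: "x \<in> A \<times> T" and y: "y \<in> A \<times> T" and e: "ins x = ins y"
    obtain r d where xr: "x = (r, d)" by (cases x)
    obtain r' d' where yr: "y = (r', d')" by (cases y)
    have rT: "r permutes T" and dT: "d \<in> T" using x xr by (auto simp: A_def ECP_def)
    have rT': "r' permutes T" and dT': "d' \<in> T" using y yr by (auto simp: A_def ECP_def)
    have q1: "ins x d = a" using ins_vals(1)[OF rT dT ab] xr by (simp add: ins_def)
    have q2: "ins x d' = a" using ins_vals(1)[OF rT' dT' ab] yr e by (simp add: ins_def)
    have "ins x permutes S" using ins_orbits(1)[OF rT fin dT ab] xr by (simp add: ins_def S_def)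
    then have "inj (ins x)" by (rule permutes_inj)
    then have dd: "d = d'" using q1 q2 by (auto dest: injD)
    have "r z = r' z" for z
    proof -
      have "r z = ins x (Transposition.transpose a b (Transposition.transpose d a z))"
        using xr by (simp add: ins_def)
      also have "\<dots> = ins y (Transposition.transpose a b (Transposition.transpose d' a z))"
        using e dd by simp
      also have "\<dots> = r' z" using yr by (simp add: ins_def)
      finally show ?thesis .
    qed
    then show "x = y" using xr yr dd by auto
  qed
  have cP2: "card P2 = card A * card T"
    unfolding P2eq card_image[OF injI] card_cartesian_product ..
  have "card P = card P1 + card P2" using PU finP1 finP2 card_Un_disjoint by metis
  then show ?thesis using cP1 cP2 by (simp add: P_def S_def A_def)
qed

fun cc :: "nat \<Rightarrow> nat \<Rightarrow> nat" where
  "cc 0 k = (if k = 0 then 1 else 0)"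
| "cc (Suc m) k = (2*m+1) * ((case k of 0 \<Rightarrow> 0 | Suc j \<Rightarrow> cc m j) + 2*m * cc m k)"

lemma ECP_empty: "ECP {} = {id}"
  by (auto simp: ECP_def)

lemma count_ECP:
  "finite S \<Longrightarrow> card S = 2*m \<Longrightarrow> card {p\<in>ECP S. NC S p = k} = cc m k"
proof (induction m arbitrary: S k)
  case 0
  then have "S = {}" by simp
  then show ?case by (auto simp: ECP_empty NC_def)
next
  case (Suc m)
  then have "S \<noteq> {}" by auto
  then obtain a where aS: "a \<in> S" by blast
  define B where "B = S - {a}"
  have finB: "finite B" using Suc.prems by (simp add: B_def)
  have cB: "card B = 2*m+1" using Suc.prems aS by (simp add: B_def)
  define Q where "Q b = {p\<in>ECP S. NC S p = k \<and> p a = b}" for b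
  have U: "{p\<in>ECP S. NC S p = k} = (\<Union>b\<in>B. Q b)"
  proof (intro equalityI subsetI)
    fix p assume p: "p \<in> {p\<in>ECP S. NC S p = k}"
    then have pS: "p permutes S" and ev: "even (card (orbit p a))" using aS by (auto simp: ECP_def)
    have "p a \<in> S" using permutes_in_image[OF pS] aS by simp
    moreover have "p a \<noteq> a"
    proof
      assume "p a = a"
      then have "orbit p a = {a}" by (simp add: orbit_eq_singleton_iff)
      then show False using ev by simp
    qed
    ultimately have "p a \<in> B" by (simp add: B_def)
    then show "p \<in> (\<Union>b\<in>B. Q b)" using p by (auto simp: Q_def)
  next
    fix p assume "p \<in> (\<Union>b\<in>B. Q b)"
    then show "p \<in> {p\<in>ECP S. NC S p = k}" by (auto simp: Q_def)
  qed
  have finQ: "finite (Q b)" for b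
    by (rule finite_subset[OF _ finite_permutations[OF Suc.prems(1)]]) (auto simp: Q_def ECP_def)
  have cQ: "card (Q b) = (case k of 0 \<Rightarrow> 0 | Suc j \<Rightarrow> cc m j) + cc m k * (2*m)" if b: "b \<in> B" for b
  proof -
    define T where "T = S - {a, b}"
    have S: "S = insert a (insert b T)" using aS b by (auto simp: T_def B_def)
    have finT: "finite T" using Suc.prems by (simp add: T_def)
    have ab: "a \<notin> T" "b \<notin> T" "a \<noteq> b" using b by (auto simp: T_def B_def)
    have cT: "card T = 2*m" using Suc.prems(2) S ab finT by simp
    have IH: "card {r\<in>ECP T. NC T r = j} = cc m j" for j using Suc.IH[OF finT cT] .
    show ?thesis unfolding Q_def S using fiber_count[OF finT ab, of k] IH cT by (simp split: nat.splits)
  qed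
  have "card {p\<in>ECP S. NC S p = k} = (\<Sum>b\<in>B. card (Q b))"
    unfolding U by (rule card_UN_disjoint[OF finB]) (use finQ in \<open>auto simp: Q_def\<close>)
  also have "\<dots> = (\<Sum>b\<in>B. (case k of 0 \<Rightarrow> 0 | Suc j \<Rightarrow> cc m j) + cc m k * (2*m))"
    by (rule sum.cong) (simp_all add: cQ)
  also have "\<dots> = cc (Suc m) k" using cB by (simp add: algebra_simps)
  finally show ?case .
qed


lemma cc_zero: "n < k \<Longrightarrow> cc n k = 0"
proof (induction n arbitrary: k)
  case 0 then show ?case by simp
next
  case (Suc n)
  then obtain j where k: "k = Suc j" and "n < j" by (cases k) auto
  then show ?case using Suc.IH[of j] Suc.IH[of k] by simp
qed

definition Tn :: "nat \<Rightarrow> nat" where "Tn n = (\<Prod>j<n. (2*j+1)^2)"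

lemma Tn_pos: "Tn n > 0" by (simp add: Tn_def)

lemma Tn_Suc: "Tn (Suc n) = Tn n * (2*n+1)^2" by (simp add: Tn_def)

lemma cc_sum: "(\<Sum>k\<le>n. cc n k) = Tn n"
proof (induction n)
  case 0 then show ?case by (simp add: Tn_def)
next
  case (Suc n)
  have s1: "(\<Sum>k\<le>Suc n. (case k of 0 \<Rightarrow> 0 | Suc j \<Rightarrow> cc n j)) = (\<Sum>k\<le>n. cc n k)"
    by (subst sum.atMost_Suc_shift) simp
  have s2: "(\<Sum>k\<le>Suc n. cc n k) = (\<Sum>k\<le>n. cc n k)"
    using cc_zero[of n "Suc n"] by simp
  have "(\<Sum>k\<le>Suc n. cc (Suc n) k) = (2*n+1) * ((\<Sum>k\<le>Suc n. (case k of 0 \<Rightarrow> 0 | Suc j \<Rightarrow> cc n j)) + 2*n * (\<Sum>k\<le>Suc n. cc n k))"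
    by (simp only: cc.simps sum.distrib sum_distrib_left distrib_left)
  also have "\<dots> = (2*n+1) * (Tn n + 2*n*Tn n)" using s1 s2 Suc.IH by simp
  also have "\<dots> = Tn (Suc n)" by (simp add: Tn_Suc power2_eq_square algebra_simps)
  finally show ?case .
qed

definition pj :: "nat \<Rightarrow> real" where "pj j = 1 / (2 * real j + 1)"

lemma pj_pos: "0 < pj j" and pj_le1: "pj j \<le> 1" by (auto simp: pj_def)

definition w :: "nat \<Rightarrow> nat \<Rightarrow> real" where "w n k = real (cc n k) / real (Tn n)"

lemma w_zero: "n < k \<Longrightarrow> w n k = 0" by (simp add: w_def cc_zero)

lemma w_sum: "(\<Sum>k\<le>n. w n k) = 1"
proof -
  have "(\<Sum>k\<le>n. w n k) = real (\<Sum>k\<le>n. cc n k) / real (Tn n)"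
    by (simp add: w_def sum_divide_distrib)
  then show ?thesis using cc_sum[of n] Tn_pos[of n] by simp
qed

lemma w_nonneg: "w n k \<ge> 0" by (simp add: w_def)

lemma w_rec: "w (Suc n) k = pj n * (case k of 0 \<Rightarrow> 0 | Suc j \<Rightarrow> w n j) + (1 - pj n) * w n k"
proof -
  have T: "real (Tn n) \<noteq> 0" using Tn_pos[of n] by simp
  have q: "2 * real n + 1 \<noteq> 0" by simp
  have e1: "real (Tn (Suc n)) = real (Tn n) * (2*real n+1)^2" by (simp add: Tn_Suc)
  have e2: "real (cc (Suc n) k) = (2*real n+1) * (real (case k of 0 \<Rightarrow> 0 | Suc j \<Rightarrow> cc n j) + 2*real n * real (cc n k))"
    by (simp add: algebra_simps)
  have e3: "(case k of 0 \<Rightarrow> 0 | Suc j \<Rightarrow> w n j) = real (case k of 0 \<Rightarrow> 0 | Suc j \<Rightarrow> cc n j) / real (Tn n)"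
    by (cases k) (simp_all add: w_def)
  have aux: "q*(A + c*B)/(T*q^2) = 1/q * (A/T) + (c/q) * (B/T)"
    if "q \<noteq> 0" "T \<noteq> 0" for A B T q c :: real using that by (simp add: field_simps power2_eq_square)
  have h: "1 - 1/(2*real n+1) = (2*real n)/(2*real n+1)" using q by (simp add: field_simps)
  show ?thesis unfolding e3 unfolding w_def e1 e2 pj_def h by (rule aux[OF q T])
qed

definition SS :: "nat \<Rightarrow> (nat \<Rightarrow> 'b::real_vector) \<Rightarrow> 'b" where
  "SS n g = (\<Sum>k\<le>n. w n k *\<^sub>R g k)"

lemma SS_rec: "SS (Suc n) g = pj n *\<^sub>R SS n (\<lambda>k. g (Suc k)) + (1 - pj n) *\<^sub>R SS n g"
proof -
  have "SS (Suc n) g = (\<Sum>k\<le>Suc n. (pj n * (case k of 0 \<Rightarrow> 0 | Suc j \<Rightarrow> w n j)) *\<^sub>R g k)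
                      + (\<Sum>k\<le>Suc n. ((1 - pj n) * w n k) *\<^sub>R g k)"
    unfolding SS_def w_rec scaleR_add_left sum.distrib ..
  also have "(\<Sum>k\<le>Suc n. (pj n * (case k of 0 \<Rightarrow> 0 | Suc j \<Rightarrow> w n j)) *\<^sub>R g k) = pj n *\<^sub>R SS n (\<lambda>k. g (Suc k))"
    by (subst sum.atMost_Suc_shift) (simp add: SS_def scaleR_sum_right)
  also have "(\<Sum>k\<le>Suc n. ((1 - pj n) * w n k) *\<^sub>R g k) = (1 - pj n) *\<^sub>R SS n g"
    using w_zero[of n "Suc n"] by (simp add: SS_def scaleR_sum_right)
  finally show ?thesis .
qed

lemma SS_add: "SS n (\<lambda>k. f k + g k) = SS n f + SS n g"
  by (simp add: SS_def scaleR_add_right sum.distrib)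

lemma SS_scale: "SS n (\<lambda>k. c *\<^sub>R f k) = c *\<^sub>R SS n f"
  by (simp add: SS_def scaleR_sum_right mult.commute)

lemma SS_mult: "SS n (\<lambda>k. c * f k) = (c::real) * SS n f"
  by (simp add: SS_def sum_distrib_left algebra_simps)

lemma SS_const: "SS n (\<lambda>k. c) = (c::real)"
  using w_sum[of n] by (simp add: SS_def sum_distrib_right[symmetric])

definition mu :: "nat \<Rightarrow> real" where "mu n = (\<Sum>j<n. pj j)"
definition va :: "nat \<Rightarrow> real" where "va n = (\<Sum>j<n. pj j * (1 - pj j))"

lemma SS_mean: "SS n (\<lambda>k. real k) = mu n"
proof (induction n)
  case 0 then show ?case by (simp add: SS_def mu_def w_def Tn_def)
next
  case (Suc n)
  have "SS n (\<lambda>k. real (Suc k)) = SS n (\<lambda>k. real k + 1)" by (simp add: add.commute)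
  also have "\<dots> = mu n + 1" using Suc.IH by (simp add: SS_add SS_const)
  finally have e: "SS n (\<lambda>k. real (Suc k)) = mu n + 1" .
  have "SS (Suc n) (\<lambda>k. real k) = pj n * SS n (\<lambda>k. real (Suc k)) + (1 - pj n) * SS n (\<lambda>k. real k)"
    by (simp only: SS_rec real_scaleR_def)
  also have "\<dots> = mu (Suc n)" unfolding e Suc.IH by (simp add: mu_def algebra_simps)
  finally show ?case .
qed

lemma SS_sq: "SS n (\<lambda>k. (real k)^2) = va n + (mu n)^2"
proof (induction n)
  case 0 then show ?case by (simp add: SS_def mu_def va_def w_def Tn_def)
next
  case (Suc n)
  have "SS n (\<lambda>k. (real (Suc k))^2) = SS n (\<lambda>k. (real k)^2 + ((2 * real k) + 1))"
    by (simp add: power2_eq_square algebra_simps)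
  also have "\<dots> = va n + (mu n)^2 + (2 * mu n + 1)"
    using Suc.IH SS_mean[of n] by (simp add: SS_add SS_const SS_mult)
  finally have e: "SS n (\<lambda>k. (real (Suc k))^2) = va n + (mu n)^2 + (2 * mu n + 1)" .
  have "SS (Suc n) (\<lambda>k. (real k)^2) = pj n * SS n (\<lambda>k. (real (Suc k))^2) + (1 - pj n) * SS n (\<lambda>k. (real k)^2)"
    by (simp only: SS_rec real_scaleR_def)
  also have "\<dots> = va (Suc n) + (mu (Suc n))^2" unfolding e Suc.IH
    by (simp add: mu_def va_def algebra_simps power2_eq_square)
  finally show ?case .
qed

lemma SS_var: "SS n (\<lambda>k. (real k - mu n)^2) = va n"
proof -
  have "SS n (\<lambda>k. (real k - mu n)^2) = SS n (\<lambda>k. (real k)^2 + ((-2 * mu n) * real k + (mu n)^2))"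
    by (simp add: power2_eq_square algebra_simps)
  also have "\<dots> = SS n (\<lambda>k. (real k)^2) + (SS n (\<lambda>k. (-2 * mu n) * real k) + SS n (\<lambda>k. (mu n)^2))"
    by (simp only: SS_add)
  also have "\<dots> = (va n + (mu n)^2) + ((-2 * mu n) * mu n + (mu n)^2)"
    by (simp only: SS_mult SS_const SS_sq SS_mean)
  also have "\<dots> = va n" by (simp add: power2_eq_square)
  finally show ?thesis .
qed

lemma SS_cexp: "SS n (\<lambda>k. exp (\<i> * complex_of_real (s * real k))) = (\<Prod>j<n. (1 - complex_of_real (pj j) + complex_of_real (pj j) * exp (\<i> * complex_of_real s)))"
proof (induction n)
  case 0 then show ?case by (simp add: SS_def w_def Tn_def)
next
  case (Suc n)
  have "SS n (\<lambda>k. exp (\<i> * complex_of_real (s * real (Suc k)))) = SS n (\<lambda>k. exp (\<i> * complex_of_real s) * exp (\<i> * complex_of_real (s * real k)))"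
    by (simp add: algebra_simps exp_add[symmetric])
  also have "\<dots> = exp (\<i> * complex_of_real s) * SS n (\<lambda>k. exp (\<i> * complex_of_real (s * real k)))"
    by (simp add: SS_def sum_distrib_left scaleR_conv_of_real algebra_simps)
  finally have e: "SS n (\<lambda>k. exp (\<i> * complex_of_real (s * real (Suc k)))) = exp (\<i> * complex_of_real s) * SS n (\<lambda>k. exp (\<i> * complex_of_real (s * real k)))" .
  show ?case unfolding SS_rec e Suc.IH
    by (simp add: scaleR_conv_of_real algebra_simps)
qed


lemma E_eq: "even_cycle_perms n = ECP {..<2*n}" by (auto simp: even_cycle_perms_def ECP_def)
lemma N_eq: "num_cycles n = NC {..<2*n}" by (simp add: num_cycles_def NC_def fun_eq_iff)

lemma card_fiber: "card {p\<in>even_cycle_perms n. num_cycles n p = k} = cc n k"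
  unfolding E_eq N_eq by (rule count_ECP) simp_all

lemma finite_E: "finite (even_cycle_perms n)"
  unfolding E_eq ECP_def by (rule finite_subset[OF _ finite_permutations[of "{..<2*n}"]]) auto

lemma card_E: "card (even_cycle_perms n) = Tn n"
proof -
  let ?E = "even_cycle_perms n"
  have le: "num_cycles n p \<le> 2*n" for p
  proof -
    have "num_cycles n p \<le> card {..<2*n}" unfolding num_cycles_def by (rule card_image_le) simp
    then show ?thesis by simp
  qed
  have U: "?E = (\<Union>k\<in>{..2*n}. {p\<in>?E. num_cycles n p = k})" using le by auto
  have "card ?E = (\<Sum>k\<le>2*n. card {p\<in>?E. num_cycles n p = k})"
    by (subst U, rule card_UN_disjoint) (use finite_E in auto)
  also have "\<dots> = (\<Sum>k\<le>2*n. cc n k)" by (simp add: card_fiber)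
  also have "\<dots> = (\<Sum>k\<le>n. cc n k)"
    by (rule sum.mono_neutral_right) (auto simp: cc_zero)
  also have "\<dots> = Tn n" by (rule cc_sum)
  finally show ?thesis .
qed

lemma E_ne: "even_cycle_perms n \<noteq> {}"
  using card_E[of n] Tn_pos[of n] by auto

definition Q :: "nat \<Rightarrow> nat pmf" where
  "Q n = map_pmf (num_cycles n) (pmf_of_set (even_cycle_perms n))"

lemma pmf_Q: "pmf (Q n) k = w n k"
proof -
  have "pmf (Q n) k = measure (measure_pmf (pmf_of_set (even_cycle_perms n))) (num_cycles n -` {k})"
    unfolding Q_def by (rule pmf_map)
  also have "\<dots> = card (even_cycle_perms n \<inter> num_cycles n -` {k}) / card (even_cycle_perms n)"
    by (rule measure_pmf_of_set[OF E_ne finite_E])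
  also have "even_cycle_perms n \<inter> num_cycles n -` {k} = {p\<in>even_cycle_perms n. num_cycles n p = k}" by auto
  finally show ?thesis by (simp add: card_fiber card_E w_def)
qed

lemma C_dist_Q: "C_dist n = map_pmf real (Q n)"
  by (simp add: C_dist_def Q_def map_pmf_comp)

lemma integral_C_dist:
  fixes f :: "real \<Rightarrow> 'b::{banach, second_countable_topology}"
  shows "integral\<^sup>L (measure_pmf (C_dist n)) f = SS n (\<lambda>k. f (real k))"
proof -
  have "integral\<^sup>L (measure_pmf (C_dist n)) f = integral\<^sup>L (measure_pmf (Q n)) (\<lambda>k. f (real k))"
    by (simp add: C_dist_Q)
  also have "\<dots> = (\<Sum>a\<le>n. pmf (Q n) a *\<^sub>R f (real a))"
  proof (rule integral_measure_pmf)
    fix a assume "a \<in> set_pmf (Q n)"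
    then have "pmf (Q n) a \<noteq> 0" by (simp add: set_pmf_iff)
    then have "\<not> n < a" using w_zero[of n a] by (auto simp: pmf_Q)
    then show "a \<in> {..n}" by simp
  qed simp
  finally show ?thesis by (simp add: SS_def pmf_Q)
qed

lemma C_mean_eq: "C_mean n = mu n"
  unfolding C_mean_def integral_C_dist by (rule SS_mean)

lemma C_var_eq: "C_var n = va n"
  unfolding C_var_def integral_C_dist using SS_var[of n] SS_mean[of n] by simp

lemma SS_cmult: "SS n (\<lambda>k. c * g k) = (c::complex) * SS n g"
  by (simp add: SS_def sum_distrib_left scaleR_conv_of_real algebra_simps)

definition Mn :: "nat \<Rightarrow> real measure" where
  "Mn n = distr (measure_pmf (C_dist n)) borel (\<lambda>x. (x - C_mean n) / sqrt (C_var n))"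

lemma real_distribution_Mn: "real_distribution (Mn n)"
  unfolding Mn_def by (rule prob_space.real_distribution_distr[OF prob_space_measure_pmf]) simp

definition afac :: "real \<Rightarrow> nat \<Rightarrow> complex" where
  "afac s j = (1 - complex_of_real (pj j) + complex_of_real (pj j) * exp (\<i> * complex_of_real s))
              * exp (\<i> * complex_of_real (- s * pj j))"

lemma char_Mn: "char (Mn n) t = (\<Prod>j<n. afac (t / sqrt (va n)) j)"
proof -
  define s where "s = t / sqrt (va n)"
  have "char (Mn n) t = integral\<^sup>L (measure_pmf (C_dist n)) (\<lambda>x. exp (\<i> * complex_of_real (t * ((x - C_mean n) / sqrt (C_var n)))))"
    unfolding Mn_def char_def by (subst integral_distr) auto
  also have "\<dots> = SS n (\<lambda>k. exp (\<i> * complex_of_real (t * ((real k - mu n) / sqrt (va n)))))"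
    by (simp add: integral_C_dist C_mean_eq C_var_eq)
  also have "\<dots> = SS n (\<lambda>k. exp (\<i> * complex_of_real (- s * mu n)) * exp (\<i> * complex_of_real (s * real k)))"
    by (simp add: s_def exp_add[symmetric] algebra_simps diff_divide_distrib)
  also have "\<dots> = exp (\<i> * complex_of_real (- s * mu n)) * (\<Prod>j<n. (1 - complex_of_real (pj j) + complex_of_real (pj j) * exp (\<i> * complex_of_real s)))"
    by (simp only: SS_cmult SS_cexp)
  also have "exp (\<i> * complex_of_real (- s * mu n)) = (\<Prod>j<n. exp (\<i> * complex_of_real (- s * pj j)))"
    by (simp add: mu_def sum_distrib_left exp_sum[symmetric])
  finally show ?thesis by (simp add: afac_def s_def prod.distrib mult.commute)
qed


lemma harm_double: "(harm (2*n) :: real) = mu n + harm n / 2"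
proof (induction n)
  case 0 then show ?case by (simp add: mu_def harm_altdef)
next
  case (Suc n)
  have "(harm (2 * Suc n) :: real) = harm (2*n) + inverse (real (Suc (2*n))) + inverse (real (Suc (Suc (2*n))))"
    by (simp add: harm_Suc)
  also have "\<dots> = mu n + harm n / 2 + 1 / (2 * real n + 1) + 1 / (2 * real n + 2)"
    using Suc.IH by (simp add: inverse_eq_divide add_ac)
  also have "1 / (2 * real n + 2) = inverse (real (Suc n)) / 2"
    by (simp add: inverse_eq_divide field_simps)
  also have "mu n + harm n / 2 + 1 / (2 * real n + 1) + inverse (real (Suc n)) / 2 = mu (Suc n) + harm (Suc n) / 2"
    by (simp add: mu_def pj_def harm_Suc add_divide_distrib)
  finally show ?case .
qed

lemma harm_bound:
  assumes "n \<ge> 1"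
  shows "\<bar>harm n - ln (real n) - euler_mascheroni\<bar> \<le> 1 / real n"
proof -
  obtain m where n: "n = Suc m" using assms by (cases n) auto
  have L: "euler_mascheroni \<ge> harm n - ln (real n + 1) + 1 / (2 * (real n + 1))"
    using euler_mascheroni_lower[of m] by (simp add: n add_ac)
  have U: "euler_mascheroni \<le> harm n - ln (real n + 1) + 1 / (2 * real n)"
    using euler_mascheroni_upper[of m] by (simp add: n add_ac)
  have rn: "real n \<ge> 1" using assms by simp
  have d1: "ln (real n + 1) - ln (real n) < 1 / real n" using ln_diff_le_inverse[OF rn] .
  have d0: "ln (real n) \<le> ln (real n + 1)" using rn by simp
  have p1: "1 / (2 * (real n + 1)) \<ge> 0" by simp
  have p2: "1 / (2 * real n) \<le> 1 / real n" using rn by (simp add: field_simps)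
  show ?thesis unfolding abs_le_iff using L U d1 d0 p1 p2 by linarith
qed

lemma mu_bound:
  assumes "n \<ge> 1"
  shows "\<bar>mu n - (ln (real n) / 2 + (euler_mascheroni / 2 + ln 2))\<bar> \<le> 1 / real n"
proof -
  have rn: "real n \<ge> 1" using assms by simp
  have h1: "\<bar>harm n - ln (real n) - euler_mascheroni\<bar> \<le> 1 / real n" by (rule harm_bound[OF assms])
  have h2: "\<bar>harm (2*n) - ln (real (2*n)) - euler_mascheroni\<bar> \<le> 1 / real (2*n)" by (rule harm_bound) (use assms in simp)
  have l2: "ln (real (2*n)) = ln 2 + ln (real n)" using rn by (simp add: ln_mult)
  have e: "mu n = harm (2*n) - harm n / 2" using harm_double[of n] by simp
  have r2: "1 / real (2*n) = 1 / (2 * real n)" by simp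
  have "\<bar>mu n - (ln (real n) / 2 + (euler_mascheroni / 2 + ln 2))\<bar>
       = \<bar>(harm (2*n) - ln (real (2*n)) - euler_mascheroni) - (harm n - ln (real n) - euler_mascheroni) / 2\<bar>"
    unfolding e l2 by (rule arg_cong[where f=abs]) (simp add: field_simps)
  also have "\<dots> \<le> 1 / (2 * real n) + (1 / real n) / 2"
  proof -
    have g: "\<bar>X - Y / 2\<bar> \<le> Z / 2 + Z / 2" if "\<bar>X\<bar> \<le> Z / 2" "\<bar>Y\<bar> \<le> Z" for X Y Z :: real
      using that unfolding abs_le_iff by linarith
    have "1 / (2 * real n) = (1 / real n) / 2" by simp
    then show ?thesis using g[OF _ h1] h2[unfolded r2] by simp
  qed
  also have "\<dots> = 1 / real n" by simp
  finally show ?thesis .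
qed

definition osq :: "nat \<Rightarrow> real" where "osq n = (\<Sum>j<n. (pj j)^2)"

lemma va_eq: "va n = mu n - osq n"
  by (simp add: va_def mu_def osq_def sum_subtractf[symmetric] power2_eq_square algebra_simps)

lemma pj_sq_le: "j \<ge> 1 \<Longrightarrow> (pj j)^2 \<le> 1 / (4 * real j) - 1 / (4 * (real j + 1))"
proof -
  assume j: "j \<ge> 1"
  then have rj: "real j > 0" by simp
  have "1 / (4 * real j) - 1 / (4 * (real j + 1)) = 1 / (4 * real j * (real j + 1))"
    using rj by (simp add: field_simps)
  moreover have "(pj j)^2 = 1 / (2 * real j + 1)^2" by (simp add: pj_def power_divide)
  moreover have "1 / (2 * real j + 1)^2 \<le> 1 / (4 * real j * (real j + 1))"
  proof (rule divide_left_mono)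
    show "4 * real j * (real j + 1) \<le> (2 * real j + 1)^2" by (simp add: power2_eq_square algebra_simps)
    show "0 < (2 * real j + 1)^2 * (4 * real j * (real j + 1))" using rj by (intro mult_pos_pos) auto
  qed simp
  ultimately show ?thesis by simp
qed

lemma osq_tail: "n \<ge> 1 \<Longrightarrow> osq (n + m) - osq n \<le> 1 / (4 * real n) - 1 / (4 * (real n + real m))"
proof (induction m)
  case 0 then show ?case by simp
next
  case (Suc m)
  have "osq (n + Suc m) - osq n = (osq (n + m) - osq n) + (pj (n+m))^2" by (simp add: osq_def)
  also have "\<dots> \<le> (1 / (4 * real n) - 1 / (4 * (real n + real m))) + (1 / (4 * real (n+m)) - 1 / (4 * (real (n+m) + 1)))"
    using Suc pj_sq_le[of "n+m"] by (intro add_mono) auto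
  also have "\<dots> = 1 / (4 * real n) - 1 / (4 * (real n + real (Suc m)))" by (simp add: algebra_simps)
  finally show ?case .
qed

definition Ssq :: "nat \<Rightarrow> real" where "Ssq N = (\<Sum>k<N. 1 / (real k + 1)^2)"

lemma Ssq_double: "Ssq (2*n) = osq n + Ssq n / 4"
proof (induction n)
  case 0 then show ?case by (simp add: Ssq_def osq_def)
next
  case (Suc n)
  have "Ssq (2 * Suc n) = Ssq (2*n) + 1 / (2 * real n + 1)^2 + 1 / (2 * real n + 2)^2"
    by (simp add: Ssq_def add_ac)
  also have "1 / (2 * real n + 2)^2 = (1 / (real n + 1)^2) / 4"
    by (simp add: power2_eq_square field_simps)
  also have "Ssq (2*n) + 1 / (2 * real n + 1)^2 + (1 / (real n + 1)^2) / 4 = osq (Suc n) + Ssq (Suc n) / 4"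
    using Suc.IH by (simp add: osq_def Ssq_def pj_def power_divide add_divide_distrib add_ac)
  finally show ?case .
qed

lemma Ssq_lim: "Ssq \<longlonglongrightarrow> pi^2 / 6"
  using inverse_squares_sums unfolding sums_def Ssq_def by (simp add: add.commute)

lemma osq_lim: "osq \<longlonglongrightarrow> pi^2 / 8"
proof -
  have a: "(\<lambda>n. Ssq (2*n)) \<longlonglongrightarrow> pi^2 / 6"
    using LIMSEQ_subseq_LIMSEQ[OF Ssq_lim, of "\<lambda>n. 2*n"] by (simp add: strict_mono_def comp_def)
  have t: "(\<lambda>n. Ssq (2*n) - Ssq n / 4) \<longlonglongrightarrow> pi^2 / 6 - (pi^2/6) / 4"
    by (intro tendsto_intros a Ssq_lim) auto
  have e1: "(\<lambda>n. Ssq (2*n) - Ssq n / 4) = osq" by (simp add: Ssq_double fun_eq_iff)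
  have e2: "pi^2 / 6 - (pi^2/6) / 4 = (pi^2 / 8 :: real)" by (simp add: field_simps)
  show ?thesis using t unfolding e1 e2 .
qed

lemma osq_bound:
  assumes "n \<ge> 1"
  shows "0 \<le> pi^2/8 - osq n" "pi^2/8 - osq n \<le> 1 / (4 * real n)"
proof -
  have mono: "osq n \<le> osq m" if "m \<ge> n" for m
  proof -
    have "incseq osq" by (rule incseq_SucI) (simp add: osq_def)
    then show ?thesis using that by (simp add: incseq_def)
  qed
  have "osq n \<le> pi^2/8" by (rule LIMSEQ_le_const[OF osq_lim]) (use mono in blast)
  then show "0 \<le> pi^2/8 - osq n" by simp
  have up: "osq m \<le> osq n + 1 / (4 * real n)" if "m \<ge> n" for m
  proof -
    obtain k where m: "m = n + k" using \<open>m \<ge> n\<close> le_Suc_ex by blast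
    have "osq (n + k) - osq n \<le> 1 / (4 * real n) - 1 / (4 * (real n + real k))" by (rule osq_tail[OF assms])
    moreover have "1 / (4 * (real n + real k)) \<ge> 0" by simp
    ultimately have "osq (n + k) \<le> osq n + 1 / (4 * real n)" by linarith
    then show ?thesis using m by simp
  qed
  have "pi^2/8 \<le> osq n + 1 / (4 * real n)" by (rule LIMSEQ_le_const2[OF osq_lim]) (use up in blast)
  then show "pi^2/8 - osq n \<le> 1 / (4 * real n)" by simp
qed

lemma va_bound:
  assumes "n \<ge> 1"
  shows "\<bar>va n - (ln (real n) / 2 + (euler_mascheroni / 2 + ln 2 - pi\<^sup>2 / 8))\<bar> \<le> 2 / real n"
proof -
  have a: "\<bar>mu n - (ln (real n) / 2 + (euler_mascheroni / 2 + ln 2))\<bar> \<le> 1 / real n" by (rule mu_bound[OF assms])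
  note b = osq_bound[OF assms]
  have c: "1 / (4 * real n) \<le> 1 / real n" using assms by (simp add: field_simps)
  have d: "2 / real n = 1 / real n + 1 / real n" by simp
  show ?thesis unfolding va_eq abs_le_iff d using a[unfolded abs_le_iff] b c by linarith
qed

lemma mean_bigo: "(\<lambda>n. C_mean n - (ln (real n) / 2 + (euler_mascheroni / 2 + ln 2))) \<in> O(\<lambda>n. 1 / real n)"
proof (rule bigoI[where c = 1])
  show "\<forall>\<^sub>F n in at_top. norm (C_mean n - (ln (real n) / 2 + (euler_mascheroni / 2 + ln 2))) \<le> 1 * norm (1 / real n)"
    using eventually_ge_at_top[of 1] by eventually_elim (simp add: C_mean_eq mu_bound)
qed

lemma var_bigo: "(\<lambda>n. C_var n - (ln (real n) / 2 + (euler_mascheroni / 2 + ln 2 - pi\<^sup>2 / 8))) \<in> O(\<lambda>n. 1 / real n)"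
proof (rule bigoI[where c = 2])
  show "\<forall>\<^sub>F n in at_top. norm (C_var n - (ln (real n) / 2 + (euler_mascheroni / 2 + ln 2 - pi\<^sup>2 / 8))) \<le> 2 * norm (1 / real n)"
    using eventually_ge_at_top[of 1] by eventually_elim (use va_bound in \<open>simp add: C_var_eq\<close>)
qed

lemma va_at_top: "filterlim va at_top sequentially"
proof -
  have ln: "filterlim (\<lambda>n. ln (real n)) at_top sequentially"
    by (rule filterlim_compose[OF ln_at_top filterlim_real_sequentially])
  have pi8: "pi^2 / 8 \<le> 2"
  proof -
    have "pi^2 \<le> 4^2" using pi_less_4 pi_gt_zero by (intro power_mono) auto
    then show ?thesis by simp
  qed
  have g0: "euler_mascheroni \<ge> (0::real)" using euler_mascheroni_pos by simp
  have l2: "ln (2::real) \<ge> 0" by simp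
  have lb: "va n \<ge> ln (real n) / 2 - 4" if "n \<ge> 1" for n
  proof -
    have "\<bar>va n - (ln (real n) / 2 + (euler_mascheroni / 2 + ln 2 - pi\<^sup>2 / 8))\<bar> \<le> 2 / real n"
      by (rule va_bound[OF that])
    moreover have "2 / real n \<le> 2" using that by (simp add: field_simps)
    ultimately show ?thesis using pi8 g0 l2 unfolding abs_le_iff by linarith
  qed
  show ?thesis unfolding filterlim_at_top
  proof
    fix Z :: real
    have "\<forall>\<^sub>F n in sequentially. 2 * Z + 8 \<le> ln (real n)" using ln unfolding filterlim_at_top by blast
    then show "\<forall>\<^sub>F n in sequentially. Z \<le> va n"
      using eventually_ge_at_top[of 1]
    proof eventually_elim
      case (elim n)
      then show ?case using lb[of n] by linarith
    qed
  qed
qed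


lemma prod_diff_le:
  fixes a b :: "nat \<Rightarrow> complex"
  assumes "finite A" "\<And>j. j \<in> A \<Longrightarrow> norm (a j) \<le> 1" "\<And>j. j \<in> A \<Longrightarrow> norm (b j) \<le> 1"
  shows "norm ((\<Prod>j\<in>A. a j) - (\<Prod>j\<in>A. b j)) \<le> (\<Sum>j\<in>A. norm (a j - b j))"
  using assms
proof (induction A rule: finite_induct)
  case empty then show ?case by simp
next
  case (insert x F)
  define Pa where "Pa = (\<Prod>j\<in>F. a j)"
  define Pb where "Pb = (\<Prod>j\<in>F. b j)"
  have IH: "norm (Pa - Pb) \<le> (\<Sum>j\<in>F. norm (a j - b j))"
    unfolding Pa_def Pb_def using insert by simp
  have nPb: "norm Pb \<le> 1"
  proof -
    have "norm Pb \<le> (\<Prod>j\<in>F. norm (b j))" unfolding Pb_def by (rule norm_prod_le)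
    also have "\<dots> \<le> 1" by (rule prod_le_1) (use insert in auto)
    finally show ?thesis .
  qed
  have nax: "norm (a x) \<le> 1" using insert by simp
  have "(\<Prod>j\<in>insert x F. a j) - (\<Prod>j\<in>insert x F. b j) = a x * (Pa - Pb) + (a x - b x) * Pb"
    using insert by (simp add: Pa_def Pb_def algebra_simps)
  then have "norm ((\<Prod>j\<in>insert x F. a j) - (\<Prod>j\<in>insert x F. b j)) \<le> norm (a x) * norm (Pa - Pb) + norm (a x - b x) * norm Pb"
    by (metis norm_mult norm_triangle_ineq)
  also have "\<dots> \<le> 1 * (\<Sum>j\<in>F. norm (a j - b j)) + norm (a x - b x) * 1"
    by (intro add_mono mult_mono IH nax nPb) auto
  also have "\<dots> = (\<Sum>j\<in>insert x F. norm (a j - b j))" using insert by simp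
  finally show ?case .
qed

lemma iexp_E: "cmod (exp (\<i> * complex_of_real x) - (1 + \<i> * complex_of_real x - complex_of_real (x^2/2))) \<le> \<bar>x\<bar>^3 / 6"
proof -
  have s: "(\<Sum>k\<le>2. (\<i> * complex_of_real x)^k / fact k) = 1 + \<i> * complex_of_real x - complex_of_real (x^2/2)"
    by (simp add: numeral_2_eq_2 power2_eq_square field_simps)
  show ?thesis using iexp_approx1[of x 2] unfolding s by (simp add: numeral_3_eq_3)
qed

lemma exp_neg_approx: "(x::real) \<ge> 0 \<Longrightarrow> \<bar>exp (-x) - (1 - x)\<bar> \<le> x^2"
proof -
  assume x: "x \<ge> 0"
  have l: "1 - x \<le> exp (-x)" using exp_ge_add_one_self[of "-x"] by simp
  have e1: "1 + x \<le> exp x" using exp_ge_add_one_self[of x] by simp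
  have "exp (-x) = 1 / exp x" by (simp add: exp_minus inverse_eq_divide)
  also have "\<dots> \<le> 1 / (1 + x)" using e1 x by (intro divide_left_mono) auto
  finally have u: "exp (-x) \<le> 1 / (1 + x)" .
  have "1 / (1 + x) - (1 - x) = x^2 / (1 + x)" using x by (simp add: field_simps power2_eq_square)
  also have "\<dots> \<le> x^2" using x by (simp add: field_simps power2_eq_square mult_left_le)
  finally show ?thesis using l u by (simp add: abs_le_iff)
qed


lemma cmod_1m: "0 \<le> p \<Longrightarrow> p \<le> 1 \<Longrightarrow> cmod (1 - complex_of_real p) = 1 - p"
proof -
  assume p: "0 \<le> p" "p \<le> 1"
  have "cmod (1 - complex_of_real p) = cmod (complex_of_real (1-p))" by simp
  also have "\<dots> = \<bar>1 - p\<bar>" by (rule norm_of_real)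
  finally show ?thesis using p by simp
qed

lemma afac_norm: "norm (afac s j) \<le> 1"
proof -
  define p where "p = pj j"
  have p: "0 \<le> p" "p \<le> 1" using pj_pos[of j] pj_le1[of j] by (auto simp: p_def)
  have "norm (1 - complex_of_real p + complex_of_real p * exp (\<i> * complex_of_real s))
        \<le> norm (complex_of_real (1 - p)) + norm (complex_of_real p * exp (\<i> * complex_of_real s))"
    by (rule order_trans[OF _ norm_triangle_ineq]) simp
  also have "\<dots> = 1"
  proof -
    have "norm (complex_of_real (1 - p)) = 1 - p" using p by (simp only: norm_of_real)
    moreover have "norm (complex_of_real p * exp (\<i> * complex_of_real s)) = p" using p by (simp add: norm_mult)
    ultimately show ?thesis by simp
  qed
  finally show ?thesis unfolding afac_def p_def[symmetric] by (simp add: norm_mult)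
qed

lemma afac_approx:
  "cmod (afac s j - complex_of_real (exp (- (s^2 * (pj j * (1 - pj j))) / 2)))
     \<le> pj j * (1 - pj j) * (\<bar>s\<bar>^3/6 + s^4/4)"
proof -
  define p where "p = pj j"
  define v where "v = p * (1 - p)"
  have p: "0 \<le> p" "p \<le> 1" using pj_pos[of j] pj_le1[of j] by (auto simp: p_def)
  have v: "0 \<le> v" "v \<le> 1" using p by (auto simp: v_def mult_le_one)
  define E1 where "E1 = exp (\<i> * complex_of_real (-s*p)) - (1 + \<i> * complex_of_real (-s*p) - complex_of_real ((-s*p)^2/2))"
  define E2 where "E2 = exp (\<i> * complex_of_real (s*(1-p))) - (1 + \<i> * complex_of_real (s*(1-p)) - complex_of_real ((s*(1-p))^2/2))"
  have ee: "exp (\<i> * complex_of_real s) * exp (\<i> * complex_of_real (- s * p)) = exp (\<i> * complex_of_real (s*(1-p)))"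
    by (simp add: exp_add[symmetric] algebra_simps)
  have a1: "afac s j = complex_of_real (1-p) * exp (\<i> * complex_of_real (-s*p)) + complex_of_real p * exp (\<i> * complex_of_real (s*(1-p)))"
    unfolding afac_def p_def[symmetric] ee[symmetric] by (simp add: algebra_simps)
  have id: "afac s j = complex_of_real (1 - s^2 * v / 2) + (complex_of_real (1-p) * E1 + complex_of_real p * E2)"
    unfolding a1 E1_def E2_def v_def by (simp add: field_simps power2_eq_square)
  have nE1: "cmod E1 \<le> \<bar>s\<bar>^3 * p^3 / 6" using iexp_E[of "-s*p"] p by (simp add: E1_def abs_mult power_mult_distrib)
  have nE2: "cmod E2 \<le> \<bar>s\<bar>^3 * (1-p)^3 / 6" using iexp_E[of "s*(1-p)"] p by (simp add: E2_def abs_mult power_mult_distrib)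
  have A: "cmod (complex_of_real (1-p) * E1 + complex_of_real p * E2) \<le> \<bar>s\<bar>^3 * v / 6"
  proof -
    have "cmod (complex_of_real (1-p) * E1 + complex_of_real p * E2) \<le> (1-p) * cmod E1 + p * cmod E2"
      by (rule order_trans[OF norm_triangle_ineq]) (use p in \<open>simp add: norm_mult cmod_1m\<close>)
    also have "\<dots> \<le> (1-p) * (\<bar>s\<bar>^3 * p^3 / 6) + p * (\<bar>s\<bar>^3 * (1-p)^3 / 6)"
      by (intro add_mono mult_left_mono nE1 nE2) (use p in auto)
    also have "\<dots> = (\<bar>s\<bar>^3 / 6) * (v * (p^2 + (1-p)^2))"
    proof -
      have r: "(1-p)*(a*p^3) + p*(a*(1-p)^3) = a*(p*(1-p)*(p^2+(1-p)^2))" for a :: real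
        by (simp add: algebra_simps power2_eq_square power3_eq_cube)
      have "(1-p)*(a*p^3/6) + p*(a*(1-p)^3/6) = (a/6)*(p*(1-p)*(p^2+(1-p)^2))" for a :: real
        using r[of a] by (simp add: field_simps)
      then show ?thesis unfolding v_def .
    qed
    also have "\<dots> \<le> (\<bar>s\<bar>^3 / 6) * (v * 1)"
    proof (intro mult_left_mono)
      have "p^2 + (1-p)^2 = 1 - 2 * (p * (1-p))" by (simp add: power2_eq_square algebra_simps)
      also have "\<dots> \<le> 1" using p by simp
      finally show "p^2 + (1-p)^2 \<le> 1" .
    qed (use v in auto)
    finally show ?thesis by simp
  qed
  have B: "\<bar>(1 - s^2 * v / 2) - exp (- (s^2 * v) / 2)\<bar> \<le> s^4 * v / 4"
  proof -
    have x0: "s^2 * v / 2 \<ge> 0" using v by simp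
    have "\<bar>exp (- (s^2 * v / 2)) - (1 - s^2 * v / 2)\<bar> \<le> (s^2 * v / 2)^2" by (rule exp_neg_approx[OF x0])
    also have "(s^2 * v / 2)^2 = s^4 * (v * v) / 4" by (simp add: power2_eq_square power4_eq_xxxx)
    also have "\<dots> \<le> s^4 * v / 4" using v by (intro divide_right_mono mult_left_mono) (auto simp: mult_le_one mult_left_le)
    finally show ?thesis by (simp add: abs_minus_commute)
  qed
  have "cmod (afac s j - complex_of_real (exp (- (s^2 * v) / 2)))
        = cmod ((complex_of_real (1-p) * E1 + complex_of_real p * E2) + complex_of_real ((1 - s^2 * v / 2) - exp (- (s^2 * v) / 2)))"
    unfolding id by (simp add: algebra_simps)
  also have "\<dots> \<le> cmod (complex_of_real (1-p) * E1 + complex_of_real p * E2) + \<bar>(1 - s^2 * v / 2) - exp (- (s^2 * v) / 2)\<bar>"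
    by (rule order_trans[OF norm_triangle_ineq]) (simp only: norm_of_real order_refl)
  also have "\<dots> \<le> \<bar>s\<bar>^3 * v / 6 + s^4 * v / 4" using A B by (rule add_mono)
  also have "\<dots> = v * (\<bar>s\<bar>^3/6 + s^4/4)" by (simp add: algebra_simps)
  finally show ?thesis by (simp add: v_def p_def)
qed


lemma bound_eq:
  fixes r t :: real
  assumes r: "r > 0"
  shows "r^2 * (\<bar>t / r\<bar>^3/6 + (t / r)^4/4) = \<bar>t\<bar>^3 / 6 * inverse r + t^4 / 4 * inverse (r^2)"
proof -
  have "\<bar>t / r\<bar> = \<bar>t\<bar> / r" using r by (simp add: abs_divide)
  then have "\<bar>t / r\<bar>^3 = \<bar>t\<bar>^3 / r^3" by (simp only: power_divide)
  moreover have "(t / r)^4 = t^4 / r^4" by (simp add: power_divide)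
  ultimately show ?thesis using r by (simp add: field_simps eval_nat_numeral)
qed

lemma char_bound:
  assumes va: "va n > 0"
  shows "cmod (char (Mn n) t - complex_of_real (exp (- (t^2) / 2)))
           \<le> \<bar>t\<bar>^3 / 6 * inverse (sqrt (va n)) + t^4 / 4 * inverse (va n)"
proof -
  define r where "r = sqrt (va n)"
  have r: "r > 0" using va by (simp add: r_def)
  have r2: "r^2 = va n" using va by (simp add: r_def)
  define s where "s = t / r"
  define b where "b j = complex_of_real (exp (- (s^2 * (pj j * (1 - pj j))) / 2))" for j
  have v0: "0 \<le> pj j * (1 - pj j)" for j using pj_pos[of j] pj_le1[of j] by simp
  have sum_e: "(\<Sum>j<n. - (s^2 * (pj j * (1 - pj j))) / 2) = - (t^2) / 2"
  proof -
    have "(\<Sum>j<n. - (s^2 * (pj j * (1 - pj j))) / 2) = - (s^2 * va n) / 2"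
      unfolding va_def by (simp add: sum_distrib_left sum_divide_distrib[symmetric] sum_negf)
    also have "s^2 * va n = t^2" using r unfolding s_def r2[symmetric] by (simp add: power_divide)
    finally show ?thesis .
  qed
  have pb: "(\<Prod>j<n. b j) = complex_of_real (exp (- (t^2) / 2))"
    unfolding b_def sum_e[symmetric] by (simp add: exp_sum)
  have "char (Mn n) t = (\<Prod>j<n. afac s j)" unfolding char_Mn s_def r_def ..
  then have "cmod (char (Mn n) t - complex_of_real (exp (- (t^2) / 2))) = cmod ((\<Prod>j<n. afac s j) - (\<Prod>j<n. b j))"
    using pb by simp
  also have "\<dots> \<le> (\<Sum>j<n. cmod (afac s j - b j))"
  proof (rule prod_diff_le)
    fix j show "norm (afac s j) \<le> 1" by (rule afac_norm)
    have "exp (- (s^2 * (pj j * (1 - pj j))) / 2) \<le> 1" using v0[of j] by simp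
    then show "norm (b j) \<le> 1" by (simp add: b_def)
  qed simp
  also have "\<dots> \<le> (\<Sum>j<n. pj j * (1 - pj j) * (\<bar>s\<bar>^3/6 + s^4/4))"
    by (rule sum_mono) (unfold b_def, rule afac_approx)
  also have "\<dots> = va n * (\<bar>s\<bar>^3/6 + s^4/4)" by (simp add: va_def sum_distrib_right)
  also have "\<dots> = \<bar>t\<bar>^3 / 6 * inverse r + t^4 / 4 * inverse (r^2)"
    unfolding r2[symmetric] s_def by (rule bound_eq[OF r])
  finally have fin: "cmod (char (Mn n) t - complex_of_real (exp (- (t^2) / 2))) \<le> \<bar>t\<bar>^3 / 6 * inverse r + t^4 / 4 * inverse (r^2)" .
  show ?thesis using fin[unfolded r2, unfolded r_def] by simp
qed

lemma char_conv: "(\<lambda>n. char (Mn n) t) \<longlonglongrightarrow> char std_normal_distribution t"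
proof -
  define g where "g n = \<bar>t\<bar>^3 / 6 * inverse (sqrt (va n)) + t^4 / 4 * inverse (va n)" for n
  have sq: "filterlim (\<lambda>n. sqrt (va n)) at_top sequentially"
    by (rule filterlim_compose[OF sqrt_at_top va_at_top])
  have g0: "g \<longlonglongrightarrow> 0" unfolding g_def
    by (intro tendsto_add_zero tendsto_mult_right_zero tendsto_inverse_0_at_top sq va_at_top)
  have ev: "\<forall>\<^sub>F n in sequentially. 1 \<le> va n" using va_at_top unfolding filterlim_at_top by blast
  have "(\<lambda>n. char (Mn n) t - complex_of_real (exp (- (t^2) / 2))) \<longlonglongrightarrow> 0"
  proof (rule Lim_null_comparison[OF _ g0])
    show "\<forall>\<^sub>F n in sequentially. norm (char (Mn n) t - complex_of_real (exp (- (t^2) / 2))) \<le> g n"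
      using ev
    proof eventually_elim
      case (elim n)
      then have "va n > 0" by simp
      then show ?case unfolding g_def by (rule char_bound)
    qed
  qed
  then show ?thesis unfolding char_std_normal_distribution by (rule LIM_zero_cancel)
qed

theorem theorem3p8:
  shows "weak_conv_m
           (\<lambda>n. distr (measure_pmf (C_dist n)) borel (\<lambda>x. (x - C_mean n) / sqrt (C_var n)))
           std_normal_distribution
       \<and> (\<lambda>n. C_mean n - (ln (real n) / 2 + (euler_mascheroni / 2 + ln 2)))
           \<in> O(\<lambda>n. 1 / real n)
       \<and> (\<lambda>n. C_var n - (ln (real n) / 2 + (euler_mascheroni / 2 + ln 2 - pi\<^sup>2 / 8)))
           \<in> O(\<lambda>n. 1 / real n)"
proof (intro conjI mean_bigo var_bigo)
  have e: "(\<lambda>n. distr (measure_pmf (C_dist n)) borel (\<lambda>x. (x - C_mean n) / sqrt (C_var n))) = Mn"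
    by (simp add: Mn_def fun_eq_iff)
  show "weak_conv_m (\<lambda>n. distr (measure_pmf (C_dist n)) borel (\<lambda>x. (x - C_mean n) / sqrt (C_var n))) std_normal_distribution"
    unfolding e by (rule levy_continuity[OF real_distribution_Mn real_dist_normal_dist char_conv])
qed


end
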